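(* Let $G_p$ be the graph defined in the context. Then $\alpha(G_p)<\alpha_q(G_p)$. (More precisely, $\alpha(G_p)\le 5$ while $\alpha_q(G_p)\ge 6$.)
   Context: All graphs are finite and simple. $\alpha(X)$ denotes the (classical) independence number of $X$. For a finite simple graph $X$ and positive integers $s,d$, a quantum $s$-coclique matrix (in dimension $d$) is a $|V(X)|\times s$ array $P=(P_{vi})_{v\in V(X),\, i\in[s]}$ of orthogonal projections $P_{vi}\in\mathbb{C}^{d\times d}$ such that (a) $\sum_{v\in V(X)}P_{vi}=I_d$ for every $i\in[s]$; (b) $P_{vi}P_{uj}=0$ for all $i\neq j$ in $[s]$ and all adjacent vertices $u\sim v$; (c) $P_{vi}P_{vj}=0$ for all $v\in V(X)$ and all $i\neq j$ in $[s]$. The quantum independence number $\alpha_q(X)$ is the largest $s$ such that a quantum $s$-coclique matrix for $X$ exists for some $d\ge 1$. $G_p$ is the orthogonality graph of the following 24 vectors in $\mathbb{R}^4$ (vertices are the vectors; two are adjacent iff their standard inner product is $0$): $(1,0,0,0),(0,1,0,0),(0,0,1,0),(0,0,0,1)$; $(0,1,1,0),(1,0,0,-1),(1,0,0,1),(0,1,-1,0)$; $(1,1,1,1),(1,-1,1,-1),(1,-1,-1,1),(1,1,-1,-1)$; $(1,-1,0,0),(1,1,0,0),(0,0,1,1),(0,0,1,-1)$; $(-1,1,1,1),(1,1,1,-1),(1,-1,1,1),(1,1,-1,1)$; $(1,0,1,0),(0,1,0,1),(1,0,-1,0),(0,1,0,-1)$. *)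

theory Defs
  imports "Jordan_Normal_Form.Schur_Decomposition"
begin

text \<open>A finite simple graph is given by a finite vertex set V and a symmetric,
irreflexive adjacency relation E (only its restriction to V matters).\<close>

definition independent_set :: "('a \<Rightarrow> 'a \<Rightarrow> bool) \<Rightarrow> 'a set \<Rightarrow> bool" where
  "independent_set E S \<longleftrightarrow> (\<forall>u\<in>S. \<forall>v\<in>S. \<not> E u v)"

definition alpha :: "'a set \<Rightarrow> ('a \<Rightarrow> 'a \<Rightarrow> bool) \<Rightarrow> nat" where
  "alpha V E = Max {card S | S. S \<subseteq> V \<and> independent_set E S}"

definition orth_proj :: "nat \<Rightarrow> complex mat \<Rightarrow> bool" where
  "orth_proj d P \<longleftrightarrow> P \<in> carrier_mat d d \<and> P * P = P \<and> mat_adjoint P = P"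

text \<open>Quantum s-coclique matrix in dimension d; the index set [s] is {0..<s}.
Condition (a), sum over V of P v i = I_d, is stated entrywise.\<close>
definition quantum_coclique ::
  "'a set \<Rightarrow> ('a \<Rightarrow> 'a \<Rightarrow> bool) \<Rightarrow> nat \<Rightarrow> nat \<Rightarrow> ('a \<Rightarrow> nat \<Rightarrow> complex mat) \<Rightarrow> bool" where
  "quantum_coclique V E s d P \<longleftrightarrow>
     (\<forall>v\<in>V. \<forall>i<s. orth_proj d (P v i)) \<and>
     (\<forall>i<s. \<forall>a<d. \<forall>b<d. (\<Sum>v\<in>V. P v i $$ (a, b)) = (1\<^sub>m d :: complex mat) $$ (a, b)) \<and>
     (\<forall>i<s. \<forall>j<s. i \<noteq> j \<longrightarrow> (\<forall>u\<in>V. \<forall>v\<in>V. E u v \<longrightarrow> P v i * P u j = 0\<^sub>m d d)) \<and>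
     (\<forall>v\<in>V. \<forall>i<s. \<forall>j<s. i \<noteq> j \<longrightarrow> P v i * P v j = 0\<^sub>m d d)"

definition alpha_q :: "'a set \<Rightarrow> ('a \<Rightarrow> 'a \<Rightarrow> bool) \<Rightarrow> nat" where
  "alpha_q V E = (GREATEST s. \<exists>d\<ge>1. \<exists>P. quantum_coclique V E s d P)"

definition Gp_vertices :: "int list set" where
  "Gp_vertices = {[1,0,0,0],[0,1,0,0],[0,0,1,0],[0,0,0,1],
                  [0,1,1,0],[1,0,0,-1],[1,0,0,1],[0,1,-1,0],
                  [1,1,1,1],[1,-1,1,-1],[1,-1,-1,1],[1,1,-1,-1],
                  [1,-1,0,0],[1,1,0,0],[0,0,1,1],[0,0,1,-1],
                  [-1,1,1,1],[1,1,1,-1],[1,-1,1,1],[1,1,-1,1],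
                  [1,0,1,0],[0,1,0,1],[1,0,-1,0],[0,1,0,-1]}"

definition Gp_adj :: "int list \<Rightarrow> int list \<Rightarrow> bool" where
  "Gp_adj u v \<longleftrightarrow> (\<Sum>k<4. u ! k * v ! k) = 0"

end

theory Submission
  imports Defs
begin

definition Bl :: "int list list list" where
  "Bl = [[[1,0,0,0],[0,1,0,0],[0,0,1,0],[0,0,0,1]],
         [[0,1,1,0],[1,0,0,-1],[1,0,0,1],[0,1,-1,0]],
         [[1,1,1,1],[1,-1,1,-1],[1,-1,-1,1],[1,1,-1,-1]],
         [[1,-1,0,0],[1,1,0,0],[0,0,1,1],[0,0,1,-1]],
         [[-1,1,1,1],[1,1,1,-1],[1,-1,1,1],[1,1,-1,1]],
         [[1,0,1,0],[0,1,0,1],[1,0,-1,0],[0,1,0,-1]]]"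

definition Bs :: "nat \<Rightarrow> int list set" where "Bs i = set (Bl ! i)"

lemma all6: "(\<forall>i<6. P i) \<longleftrightarrow> P 0 \<and> P 1 \<and> P 2 \<and> P 3 \<and> P 4 \<and> P (5::nat)"
proof
  assume "P 0 \<and> P 1 \<and> P 2 \<and> P 3 \<and> P 4 \<and> P (5::nat)"
  moreover have "\<And>i::nat. i < 6 \<Longrightarrow> i = 0 \<or> i = 1 \<or> i = 2 \<or> i = 3 \<or> i = 4 \<or> i = 5" by arith
  ultimately show "\<forall>i<6. P i" by blast
qed simp

lemma adj_expand: "Gp_adj u v \<longleftrightarrow> u!0*v!0+u!1*v!1+u!2*v!2+u!3*v!3 = 0"
  by (simp add: Gp_adj_def numeral_eq_Suc lessThan_Suc algebra_simps)

lemma Bs_simps: "Bs 0 = {[1,0,0,0],[0,1,0,0],[0,0,1,0],[0,0,0,1]}"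
  "Bs 1 = {[0,1,1,0],[1,0,0,-1],[1,0,0,1],[0,1,-1,0]}"
  "Bs 2 = {[1,1,1,1],[1,-1,1,-1],[1,-1,-1,1],[1,1,-1,-1]}"
  "Bs 3 = {[1,-1,0,0],[1,1,0,0],[0,0,1,1],[0,0,1,-1]}"
  "Bs 4 = {[-1,1,1,1],[1,1,1,-1],[1,-1,1,1],[1,1,-1,1]}"
  "Bs 5 = {[1,0,1,0],[0,1,0,1],[1,0,-1,0],[0,1,0,-1]}"
  by (simp_all add: Bs_def Bl_def numeral_eq_Suc)

lemma clique0: "\<forall>i<6. \<forall>x\<in>Bs i. \<forall>y\<in>Bs i. x \<noteq> y \<longrightarrow> Gp_adj x y"
  unfolding all6 Bs_simps by (simp add: adj_expand)

lemma disj0: "\<forall>i<6. \<forall>j<6. i \<noteq> j \<longrightarrow> Bs i \<inter> Bs j = {}"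
  unfolding all6 Bs_simps by simp

lemma cover: "Gp_vertices = Bs 0 \<union> Bs 1 \<union> Bs 2 \<union> Bs 3 \<union> Bs 4 \<union> Bs 5"
  unfolding Bs_simps Gp_vertices_def by auto

lemma no6: "\<forall>x0\<in>Bs 0. \<forall>x1\<in>Bs 1. Gp_adj x0 x1 \<or> (\<forall>x2\<in>Bs 2. Gp_adj x0 x2 \<or> Gp_adj x1 x2 \<or>
   (\<forall>x3\<in>Bs 3. Gp_adj x0 x3 \<or> Gp_adj x1 x3 \<or> Gp_adj x2 x3 \<or>
   (\<forall>x4\<in>Bs 4. Gp_adj x0 x4 \<or> Gp_adj x1 x4 \<or> Gp_adj x2 x4 \<or> Gp_adj x3 x4 \<or>
   (\<forall>x5\<in>Bs 5. Gp_adj x0 x5 \<or> Gp_adj x1 x5 \<or> Gp_adj x2 x5 \<or> Gp_adj x3 x5 \<or> Gp_adj x4 x5))))"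
  unfolding Bs_simps by (simp add: adj_expand)

lemma mult_entry: "A \<in> carrier_mat d d \<Longrightarrow> B \<in> carrier_mat d d \<Longrightarrow> a<d \<Longrightarrow> b<d \<Longrightarrow> (A*B)$$(a,b) = (\<Sum>c<d. A$$(a,c) * B$$(c,b))"
  by (simp add: scalar_prod_def atLeast0LessThan)
lemma adj_entry: "A \<in> carrier_mat d d \<Longrightarrow> a<d \<Longrightarrow> b<d \<Longrightarrow> mat_adjoint A $$ (a,b) = cnj (A $$ (b,a))"
  by (simp add: mat_adjoint_def mat_of_rows_def)

definition nrm :: "int list \<Rightarrow> int" where "nrm v = (\<Sum>k<4. v!k * v!k)"
definition proj :: "int list \<Rightarrow> complex mat" where
  "proj v = mat 4 4 (\<lambda>(a,b). of_int (v!a * v!b) / of_int (nrm v))"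

lemma proj_car: "proj v \<in> carrier_mat 4 4" by (simp add: proj_def)
lemma proj_entry: "a < 4 \<Longrightarrow> b < 4 \<Longrightarrow> proj v $$ (a,b) = of_int (v!a * v!b) / of_int (nrm v)"
  by (simp add: proj_def)

lemma proj_prod: assumes "nrm v \<noteq> 0" "nrm u \<noteq> 0"
  shows "proj v * proj u = mat 4 4 (\<lambda>(a,b). of_int (v!a * u!b) * of_int (\<Sum>k<4. v!k * u!k) / (of_int (nrm v) * of_int (nrm u)))"
proof (rule eq_matI)
  fix a b assume a: "a < dim_row (mat 4 4 (\<lambda>(a,b). of_int (v!a * u!b) * of_int (\<Sum>k<4. v!k * u!k) / (of_int (nrm v) * of_int (nrm u)) :: complex))"
    and b: "b < dim_col (mat 4 4 (\<lambda>(a,b). of_int (v!a * u!b) * of_int (\<Sum>k<4. v!k * u!k) / (of_int (nrm v) * of_int (nrm u)) :: complex))"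
  then have a: "a < 4" and b: "b < 4" by auto
  have "(proj v * proj u) $$ (a,b) = (\<Sum>c<4. of_int (v!a * v!c) / of_int (nrm v) * (of_int (u!c * u!b) / of_int (nrm u)))"
    using mult_entry[OF proj_car proj_car a b] a b by (simp add: proj_entry)
  also have "\<dots> = (\<Sum>c<4. of_int (v!a * u!b) * of_int (v!c * u!c) / (of_int (nrm v) * of_int (nrm u)))"
    by (rule sum.cong) (simp_all add: field_simps)
  also have "\<dots> = of_int (v!a * u!b) * of_int (\<Sum>k<4. v!k * u!k) / (of_int (nrm v) * of_int (nrm u))"
    by (simp add: sum_divide_distrib[symmetric] sum_distrib_left[symmetric])
  finally show "(proj v * proj u) $$ (a,b) = mat 4 4 (\<lambda>(a,b). of_int (v!a * u!b) * of_int (\<Sum>k<4. v!k * u!k) / (of_int (nrm v) * of_int (nrm u))) $$ (a,b)"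
    using a b by simp
qed (auto simp: proj_def)

lemma proj_idem: assumes "nrm v \<noteq> 0" shows "proj v * proj v = proj v"
  unfolding proj_prod[OF assms assms] by (rule eq_matI) (auto simp: proj_def nrm_def[symmetric] assms)

lemma proj_orth: assumes "nrm v \<noteq> 0" "nrm u \<noteq> 0" "(\<Sum>k<4. v!k * u!k) = 0" shows "proj v * proj u = 0\<^sub>m 4 4"
  unfolding proj_prod[OF assms(1,2)] assms(3) by (rule eq_matI) auto

lemma proj_adj: "mat_adjoint (proj v) = proj v"
proof (rule eq_matI)
  show "dim_row (mat_adjoint (proj v)) = dim_row (proj v)" "dim_col (mat_adjoint (proj v)) = dim_col (proj v)"
    by (simp_all add: mat_adjoint_def proj_def)
  fix a b assume "a < dim_row (proj v)" "b < dim_col (proj v)"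
  then have a: "a < 4" and b: "b < 4" by (auto simp: proj_def)
  show "mat_adjoint (proj v) $$ (a,b) = proj v $$ (a,b)"
    using adj_entry[OF proj_car a b] a b by (simp add: proj_entry mult.commute)
qed

lemma all4: "(\<forall>i<4. P i) \<longleftrightarrow> P 0 \<and> P 1 \<and> P 2 \<and> P (3::nat)"
proof
  assume "P 0 \<and> P 1 \<and> P 2 \<and> P (3::nat)"
  moreover have "\<And>i::nat. i < 4 \<Longrightarrow> i = 0 \<or> i = 1 \<or> i = 2 \<or> i = 3" by arith
  ultimately show "\<forall>i<4. P i" by blast
qed simp

lemma nrm_expand: "nrm v = v!0*v!0+v!1*v!1+v!2*v!2+v!3*v!3"
  by (simp add: nrm_def numeral_eq_Suc lessThan_Suc algebra_simps)

lemma nrm_nz: "\<forall>i<6. \<forall>v\<in>Bs i. nrm v \<noteq> 0"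
  unfolding all6 Bs_simps by (simp add: nrm_expand)

lemma basis_sum: "\<forall>i<6. \<forall>a<4. \<forall>b<4. (\<Sum>v\<in>Bs i. proj v $$ (a,b)) = (1\<^sub>m 4 :: complex mat) $$ (a,b)"
  unfolding all6 all4 Bs_simps by (simp add: proj_entry nrm_expand)

lemma lt6: "(i::nat) < 6 \<Longrightarrow> i = 0 \<or> i = 1 \<or> i = 2 \<or> i = 3 \<or> i = 4 \<or> i = 5" by arith

lemma Bs_sub: "i < 6 \<Longrightarrow> Bs i \<subseteq> Gp_vertices"
  using lt6[of i] cover by auto

definition PP :: "int list \<Rightarrow> nat \<Rightarrow> complex mat" where
  "PP v i = (if i < 6 \<and> v \<in> Bs i then proj v else 0\<^sub>m 4 4)"

lemma PP_car: "PP v i \<in> carrier_mat 4 4" by (simp add: PP_def proj_car)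

lemma zero_adj: "mat_adjoint (0\<^sub>m n n :: complex mat) = 0\<^sub>m n n"
proof (rule eq_matI)
  fix a b assume "a < dim_row (0\<^sub>m n n :: complex mat)" "b < dim_col (0\<^sub>m n n :: complex mat)"
  then have a: "a < n" and b: "b < n" by auto
  show "mat_adjoint (0\<^sub>m n n :: complex mat) $$ (a,b) = 0\<^sub>m n n $$ (a,b)"
    using adj_entry[of "0\<^sub>m n n :: complex mat" n a b] a b by simp
qed (simp_all add: mat_adjoint_def)

lemma PP_orth_proj: "orth_proj 4 (PP v i)"
proof (cases "i < 6 \<and> v \<in> Bs i")
  case True
  then have "nrm v \<noteq> 0" using nrm_nz by blast
  then show ?thesis using True by (simp add: PP_def orth_proj_def proj_car proj_idem proj_adj)
next
  case False
  then have "PP v i = 0\<^sub>m 4 4" unfolding PP_def by meson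
  then show ?thesis by (simp add: orth_proj_def zero_adj)
qed

lemma qc6: "quantum_coclique Gp_vertices Gp_adj 6 4 PP"
  unfolding quantum_coclique_def
proof (intro conjI ballI allI impI)
  fix v i show "orth_proj 4 (PP v i)" by (rule PP_orth_proj)
next
  fix i a b :: nat assume i: "i < 6" and a: "a < 4" and b: "b < 4"
  have "(\<Sum>v\<in>Gp_vertices. PP v i $$ (a, b)) = (\<Sum>v\<in>Bs i. proj v $$ (a, b))"
  proof (rule sum.mono_neutral_cong_right)
    show "finite Gp_vertices" by (simp add: Gp_vertices_def)
    show "Bs i \<subseteq> Gp_vertices" using Bs_sub[OF i] .
    show "\<forall>x\<in>Gp_vertices - Bs i. PP x i $$ (a, b) = 0" using a b by (simp add: PP_def)
    show "\<And>x. x \<in> Bs i \<Longrightarrow> PP x i $$ (a, b) = proj x $$ (a, b)" using i by (simp add: PP_def)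
  qed
  also have "\<dots> = (1\<^sub>m 4 :: complex mat) $$ (a,b)" using basis_sum i a b by blast
  finally show "(\<Sum>v\<in>Gp_vertices. PP v i $$ (a, b)) = (1\<^sub>m 4 :: complex mat) $$ (a,b)" .
next
  fix i j :: nat and u v :: "int list" assume ij: "i < 6" "j < 6" "i \<noteq> j" and uv: "u \<in> Gp_vertices" "v \<in> Gp_vertices" and adj: "Gp_adj u v"
  show "PP v i * PP u j = 0\<^sub>m 4 4"
  proof (cases "v \<in> Bs i \<and> u \<in> Bs j")
    case True
    have "nrm v \<noteq> 0" "nrm u \<noteq> 0" using True ij nrm_nz by blast+
    moreover have "(\<Sum>k<4. v!k * u!k) = 0" using adj unfolding Gp_adj_def by (simp add: mult.commute)
    ultimately show ?thesis using True ij by (simp add: PP_def proj_orth)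
  next
    case False
    then show ?thesis using ij by (auto simp: PP_def left_mult_zero_mat[OF proj_car] right_mult_zero_mat[OF proj_car])
  qed
next
  fix v :: "int list" and i j :: nat assume v: "v \<in> Gp_vertices" and ij: "i < 6" "j < 6" "i \<noteq> j"
  have "\<not> (v \<in> Bs i \<and> v \<in> Bs j)" using disj0 ij by blast
  then show "PP v i * PP v j = 0\<^sub>m 4 4" by (auto simp: PP_def left_mult_zero_mat[OF proj_car] right_mult_zero_mat[OF proj_car])
qed

lemma indep_le5: assumes S: "S \<subseteq> Gp_vertices" and ind: "independent_set Gp_adj S" shows "card S \<le> 5"
proof (rule ccontr)
  assume big: "\<not> card S \<le> 5"
  have finS: "finite S" using S by (rule finite_subset) (simp add: Gp_vertices_def)
  have nadj: "\<And>x y. x \<in> S \<Longrightarrow> y \<in> S \<Longrightarrow> \<not> Gp_adj x y" using ind unfolding independent_set_def by blast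
  define A where "A i = S \<inter> Bs i" for i
  have le1: "card (A i) \<le> 1" if i: "i<6" for i
  proof -
    have "finite (A i)" using finS by (simp add: A_def)
    moreover have "\<forall>a\<in>A i. \<forall>b\<in>A i. a = b"
      using clique0 i nadj unfolding A_def by blast
    ultimately show ?thesis using card_le_Suc0_iff_eq by auto
  qed
  have eq: "S = ((((A 0 \<union> A 1) \<union> A 2) \<union> A 3) \<union> A 4) \<union> A 5" using S cover by (auto simp: A_def)
  have u: "\<And>X Y. card (X \<union> Y) \<le> card X + card Y" by (rule card_Un_le)
  have "card S \<le> card (A 0) + card (A 1) + card (A 2) + card (A 3) + card (A 4) + card (A 5)"
    using u[of "(((A 0 \<union> A 1) \<union> A 2) \<union> A 3) \<union> A 4" "A 5"] u[of "((A 0 \<union> A 1) \<union> A 2) \<union> A 3" "A 4"]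
      u[of "(A 0 \<union> A 1) \<union> A 2" "A 3"] u[of "A 0 \<union> A 1" "A 2"] u[of "A 0" "A 1"] arg_cong[OF eq, of card] by linarith
  moreover have "card (A 0) \<le> 1" "card (A 1) \<le> 1" "card (A 2) \<le> 1" "card (A 3) \<le> 1" "card (A 4) \<le> 1" "card (A 5) \<le> 1"
    using le1 by auto
  ultimately have c1: "card (A 0) = 1" "card (A 1) = 1" "card (A 2) = 1" "card (A 3) = 1" "card (A 4) = 1" "card (A 5) = 1"
    using big by linarith+
  have ex: "\<exists>x. x \<in> S \<and> x \<in> Bs i" if "card (A i) = 1" for i
  proof -
    from that obtain x where "A i = {x}" by (rule card_1_singletonE)
    then show ?thesis unfolding A_def by blast
  qed
  obtain x0 where "x0 \<in> S" "x0 \<in> Bs 0" using ex[OF c1(1)] by blast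
  obtain x1 where "x1 \<in> S" "x1 \<in> Bs 1" using ex[OF c1(2)] by blast
  obtain x2 where "x2 \<in> S" "x2 \<in> Bs 2" using ex[OF c1(3)] by blast
  obtain x3 where "x3 \<in> S" "x3 \<in> Bs 3" using ex[OF c1(4)] by blast
  obtain x4 where "x4 \<in> S" "x4 \<in> Bs 4" using ex[OF c1(5)] by blast
  obtain x5 where "x5 \<in> S" "x5 \<in> Bs 5" using ex[OF c1(6)] by blast
  have n: "\<not> Gp_adj x0 x1" "\<not> Gp_adj x0 x2" "\<not> Gp_adj x0 x3" "\<not> Gp_adj x0 x4" "\<not> Gp_adj x0 x5"
    "\<not> Gp_adj x1 x2" "\<not> Gp_adj x1 x3" "\<not> Gp_adj x1 x4" "\<not> Gp_adj x1 x5"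
    "\<not> Gp_adj x2 x3" "\<not> Gp_adj x2 x4" "\<not> Gp_adj x2 x5"
    "\<not> Gp_adj x3 x4" "\<not> Gp_adj x3 x5" "\<not> Gp_adj x4 x5"
    by (rule nadj; fact)+
  have "Gp_adj x0 x1 \<or> (\<forall>x2\<in>Bs 2. Gp_adj x0 x2 \<or> Gp_adj x1 x2 \<or>
   (\<forall>x3\<in>Bs 3. Gp_adj x0 x3 \<or> Gp_adj x1 x3 \<or> Gp_adj x2 x3 \<or>
   (\<forall>x4\<in>Bs 4. Gp_adj x0 x4 \<or> Gp_adj x1 x4 \<or> Gp_adj x2 x4 \<or> Gp_adj x3 x4 \<or>
   (\<forall>x5\<in>Bs 5. Gp_adj x0 x5 \<or> Gp_adj x1 x5 \<or> Gp_adj x2 x5 \<or> Gp_adj x3 x5 \<or> Gp_adj x4 x5))))"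
    using no6 \<open>x0 \<in> Bs 0\<close> \<open>x1 \<in> Bs 1\<close> by blast
  then show False using n \<open>x2 \<in> Bs 2\<close> \<open>x3 \<in> Bs 3\<close> \<open>x4 \<in> Bs 4\<close> \<open>x5 \<in> Bs 5\<close> by blast
qed

lemma alpha_le5: "alpha Gp_vertices Gp_adj \<le> 5"
  unfolding alpha_def
proof (rule Max.boundedI)
  show "finite {card S |S. S \<subseteq> Gp_vertices \<and> independent_set Gp_adj S}"
  proof (rule finite_subset)
    show "{card S |S. S \<subseteq> Gp_vertices \<and> independent_set Gp_adj S} \<subseteq> card ` Pow Gp_vertices" by auto
    show "finite (card ` Pow Gp_vertices)" by (simp add: Gp_vertices_def)
  qed
  show "{card S |S. S \<subseteq> Gp_vertices \<and> independent_set Gp_adj S} \<noteq> {}"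
    by (auto simp: independent_set_def)
  show "\<And>a. a \<in> {card S |S. S \<subseteq> Gp_vertices \<and> independent_set Gp_adj S} \<Longrightarrow> a \<le> 5"
    using indep_le5 by auto
qed

lemma real_le1: assumes "(x::real)^2 \<le> x" shows "x \<le> 1"
proof (rule ccontr)
  assume "\<not> x \<le> 1"
  then have "x * 1 < x * x" by (intro mult_strict_left_mono) auto
  then show False using assms by (simp add: power2_eq_square)
qed

lemma qc_bound:
  assumes fin: "finite V" and d: "d \<ge> 1" and qc: "quantum_coclique V E s d P"
  shows "s \<le> card V"
proof -
  have proj: "\<And>v i. v\<in>V \<Longrightarrow> i<s \<Longrightarrow> orth_proj d (P v i)"
   and sumI: "\<And>i a b. i<s \<Longrightarrow> a<d \<Longrightarrow> b<d \<Longrightarrow> (\<Sum>v\<in>V. P v i $$ (a, b)) = (1\<^sub>m d :: complex mat) $$ (a, b)"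
   and orth: "\<And>v i j. v\<in>V \<Longrightarrow> i<s \<Longrightarrow> j<s \<Longrightarrow> i\<noteq>j \<Longrightarrow> P v i * P v j = 0\<^sub>m d d"
    using qc unfolding quantum_coclique_def by auto
  have car: "\<And>v i. v\<in>V \<Longrightarrow> i<s \<Longrightarrow> P v i \<in> carrier_mat d d"
    using proj orth_proj_def by blast
  have idem: "\<And>v i a b. v\<in>V \<Longrightarrow> i<s \<Longrightarrow> a<d \<Longrightarrow> b<d \<Longrightarrow>
      (\<Sum>c<d. P v i $$(a,c) * P v i $$ (c,b)) = P v i $$ (a,b)"
  proof -
    fix v i a b assume h: "v\<in>V" "i<s" "a<d" "b<d"
    have "P v i * P v i = P v i" using proj[OF h(1,2)] orth_proj_def by blast
    then show "(\<Sum>c<d. P v i $$(a,c) * P v i $$ (c,b)) = P v i $$ (a,b)"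
      using mult_entry[OF car[OF h(1,2)] car[OF h(1,2)] h(3,4)] by simp
  qed
  have herm: "\<And>v i a b. v\<in>V \<Longrightarrow> i<s \<Longrightarrow> a<d \<Longrightarrow> b<d \<Longrightarrow> P v i $$ (b,a) = cnj (P v i $$ (a,b))"
  proof -
    fix v i a b assume h: "v\<in>V" "i<s" "a<d" "b<d"
    have "mat_adjoint (P v i) = P v i" using proj[OF h(1,2)] orth_proj_def by blast
    then show "P v i $$ (b,a) = cnj (P v i $$ (a,b))"
      using adj_entry[OF car[OF h(1,2)] h(4,3)] by simp
  qed
  have cross: "\<And>v i j a b. v\<in>V \<Longrightarrow> i<s \<Longrightarrow> j<s \<Longrightarrow> i\<noteq>j \<Longrightarrow> a<d \<Longrightarrow> b<d \<Longrightarrow>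
      (\<Sum>c<d. P v i $$(a,c) * P v j $$ (c,b)) = 0"
  proof -
    fix v i j a b assume h: "v\<in>V" "i<s" "j<s" "i\<noteq>j" "a<d" "b<d"
    show "(\<Sum>c<d. P v i $$(a,c) * P v j $$ (c,b)) = 0"
      using mult_entry[OF car[OF h(1,2)] car[OF h(1,3)] h(5,6)] orth[OF h(1-4)] h(5,6) by simp
  qed
  define Q where "Q v a b = (\<Sum>i<s. P v i $$ (a,b))" for v a b
  have Qdiag: "Re (Q v a a) \<le> 1" if v: "v\<in>V" and a: "a<d" for v a
  proof -
    have "Q v a a = (\<Sum>i<s. \<Sum>j<s. \<Sum>c<d. P v i $$(a,c) * P v j $$ (c,a))"
    proof -
      have "(\<Sum>j<s. \<Sum>c<d. P v i $$(a,c) * P v j $$ (c,a)) = P v i $$ (a,a)" if i: "i<s" for i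
      proof -
        have "(\<Sum>j<s. \<Sum>c<d. P v i $$(a,c) * P v j $$ (c,a))
            = (\<Sum>j<s. if j = i then P v i $$ (a,a) else 0)"
        proof (rule sum.cong[OF refl])
          fix j assume j: "j \<in> {..<s}"
          show "(\<Sum>c<d. P v i $$(a,c) * P v j $$ (c,a)) = (if j = i then P v i $$ (a,a) else 0)"
          proof (cases "j = i")
            case True then show ?thesis using idem[OF v i a a] by simp
          next
            case False then show ?thesis using cross[of v i j a a] v i j a by simp
          qed
        qed
        also have "\<dots> = P v i $$ (a,a)" using i by simp
        finally show ?thesis .
      qed
      then show ?thesis unfolding Q_def by simp
    qed
    also have "\<dots> = (\<Sum>c<d. Q v a c * Q v c a)"
    proof -
      have "(\<Sum>c<d. Q v a c * Q v c a) = (\<Sum>c<d. \<Sum>i<s. \<Sum>j<s. P v i $$(a,c) * P v j $$ (c,a))"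
        unfolding Q_def sum_product by simp
      also have "\<dots> = (\<Sum>i<s. \<Sum>c<d. \<Sum>j<s. P v i $$(a,c) * P v j $$ (c,a))"
        by (rule sum.swap)
      also have "\<dots> = (\<Sum>i<s. \<Sum>j<s. \<Sum>c<d. P v i $$(a,c) * P v j $$ (c,a))"
        by (rule sum.cong[OF refl], rule sum.swap)
      finally show ?thesis by (rule sym)
    qed
    also have "\<dots> = (\<Sum>c<d. complex_of_real ((cmod (Q v a c))^2))"
    proof (rule sum.cong)
      fix c assume c: "c \<in> {..<d}"
      have "Q v c a = cnj (Q v a c)" unfolding Q_def cnj_sum by (rule sum.cong[OF refl], rule herm) (use v a c in auto)
      then show "Q v a c * Q v c a = complex_of_real ((cmod (Q v a c))^2)"
        using complex_norm_square[of "Q v a c"] by metis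
    qed simp
    finally have eq: "Re (Q v a a) = (\<Sum>c<d. (cmod (Q v a c))^2)" by simp
    have "(cmod (Q v a a))^2 \<le> (\<Sum>c<d. (cmod (Q v a c))^2)"
      by (rule member_le_sum) (use a in auto)
    moreover have "(Re (Q v a a))^2 \<le> (cmod (Q v a a))^2"
      by (simp add: cmod_power2)
    ultimately show ?thesis using eq real_le1 by (metis order_trans)
  qed
  have tr: "(\<Sum>a<d. \<Sum>v\<in>V. Re (P v i $$ (a,a))) = real d" if i: "i<s" for i
  proof -
    have "(\<Sum>v\<in>V. Re (P v i $$ (a,a))) = 1" if a: "a<d" for a
    proof -
      have "(\<Sum>v\<in>V. Re (P v i $$ (a,a))) = Re (\<Sum>v\<in>V. P v i $$ (a,a))" by (simp add: Re_sum)
      also have "\<dots> = 1" using sumI[OF i a a] a by simp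
      finally show ?thesis .
    qed
    then show ?thesis by simp
  qed
  have "real s * real d = (\<Sum>i<s. \<Sum>a<d. \<Sum>v\<in>V. Re (P v i $$ (a,a)))" using tr by simp
  also have "\<dots> = (\<Sum>a<d. \<Sum>i<s. \<Sum>v\<in>V. Re (P v i $$ (a,a)))" by (rule sum.swap)
  also have "\<dots> = (\<Sum>a<d. \<Sum>v\<in>V. \<Sum>i<s. Re (P v i $$ (a,a)))" by (rule sum.cong[OF refl], rule sum.swap)
  also have "\<dots> = (\<Sum>v\<in>V. \<Sum>a<d. \<Sum>i<s. Re (P v i $$ (a,a)))" by (rule sum.swap)
  also have "\<dots> = (\<Sum>v\<in>V. \<Sum>a<d. Re (Q v a a))" by (simp add: Q_def Re_sum)
  also have "\<dots> \<le> (\<Sum>v\<in>V. \<Sum>a<d. (1::real))" by (intro sum_mono) (use Qdiag in auto)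
  also have "\<dots> = real (card V) * real d" by simp
  finally have "real s * real d \<le> real (card V) * real d" .
  then show ?thesis using d by simp
qed

lemma alpha_q_ge6: "6 \<le> alpha_q Gp_vertices Gp_adj"
  unfolding alpha_q_def
proof (rule Greatest_le_nat[where b = "card Gp_vertices"])
  show "\<exists>d\<ge>1. \<exists>P. quantum_coclique Gp_vertices Gp_adj 6 d P" using qc6 by (intro exI[of _ 4] conjI exI[of _ PP]) auto
  show "\<And>y. (\<exists>d\<ge>1. \<exists>P. quantum_coclique Gp_vertices Gp_adj y d P) \<Longrightarrow> y \<le> card Gp_vertices"
  proof -
    fix y assume "\<exists>d\<ge>1. \<exists>P. quantum_coclique Gp_vertices Gp_adj y d P"
    then obtain d P where "d \<ge> 1" "quantum_coclique Gp_vertices Gp_adj y d P" by blast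
    moreover have "finite Gp_vertices" by (simp add: Gp_vertices_def)
    ultimately show "y \<le> card Gp_vertices" using qc_bound by blast
  qed
qed

theorem mainTheorem1:
  shows "alpha Gp_vertices Gp_adj < alpha_q Gp_vertices Gp_adj \<and>
         alpha Gp_vertices Gp_adj \<le> 5 \<and> 6 \<le> alpha_q Gp_vertices Gp_adj"
  using alpha_le5 alpha_q_ge6 by simp

end
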